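(* Let $\mathcal{G}$ be a causal graph over a finite set $\mathbf{V}$ of variables with target variable $Y \in \mathbf{V}$ and set of intervenable variables $\mathbf{I} \subseteq \mathbf{V}\setminus\{Y\}$. Suppose that (i) there exists $C \in \mathrm{pa}_{\mathcal{G}}(Y)$ with $C \notin \mathbf{I}$, or (ii) there exists $C \in \mathrm{sp}_{\mathcal{G}}(Y)$. If there exists $X \in \mathrm{an}_{\mathcal{G}}(Y) \cap \mathbf{I}$ such that $\{\langle X, \{C\}\rangle\}$ is a mixed policy scope for $\mathcal{G}$, then there exists at least one structural causal model compatible with $\mathcal{G}$ for which $$\min_{\mathcal{S} \in \Sigma_{\text{hard}},\, \pi_{\mathcal{S}} \in \Pi_{\mathcal{S}}} \mu^Y_{\pi_{\mathcal{S}}} \;>\; \min_{\mathcal{S} \in \Sigma,\, \pi_{\mathcal{S}} \in \Pi_{\mathcal{S}}} \mu^Y_{\pi_{\mathcal{S}}}.$$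
   Context: A structural causal model (SCM) is a tuple $\mathcal{M}=\langle \mathbf{V}, \mathbf{U}, \mathcal{F}, p(\mathbf{U})\rangle$ where $\mathbf{U}$ is a set of mutually independent unobserved exogenous random variables with distribution $p(\mathbf{U})$ and $\mathcal{F}=\{f_V\}_{V\in\mathbf{V}}$ are deterministic functions with $V = f_V(\mathrm{pa}(V), \mathbf{U}_V)$, $\mathrm{pa}(V)\subseteq \mathbf{V}\setminus\{V\}$, $\mathbf{U}_V\subseteq\mathbf{U}$. Its causal graph has nodes $\mathbf{V}$, a directed edge $V\to W$ if $V\in\mathrm{pa}(W)$, and a bidirected edge $V\leftrightarrow W$ if $\mathbf{U}_V\cap\mathbf{U}_W\neq\emptyset$; causal graphs are assumed acyclic (no directed cycles). An SCM is compatible with a causal graph $\mathcal{G}$ over $\mathbf{V}$ if every edge of its causal graph is in $\mathcal{G}$. $\mathrm{pa}_{\mathcal{G}}(V)$, $\mathrm{an}_{\mathcal{G}}(V)$ denote parents and ancestors (nodes with a directed path to $V$) in $\mathcal{G}$; $\mathrm{sp}_{\mathcal{G}}(V)$ denotes nodes joined to $V$ by a bidirected edge. $\mathcal{R}_X$ denotes the range of $X$. A mixed policy scope (MPS) $\mathcal{S}$ for $\mathcal{G}$ is a collection of pairs $\langle X, \mathbf{C}_X\rangle$ with $X\in\mathbf{I}$, $\mathbf{C}_X\subseteq\mathbf{V}\setminus\{X,Y\}$, such that the graph obtained from $\mathcal{G}$ by removing all incoming edges into $X$ and adding directed edges from each element of $\mathbf{C}_X$ to $X$, for every pair in $\mathcal{S}$,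 is acyclic. $\Sigma$ is the set of all MPSs for $\mathcal{G}$ and $\Sigma_{\text{hard}}=\{\mathcal{S}\in\Sigma: \mathbf{C}_X=\emptyset \text{ for all } \langle X,\mathbf{C}_X\rangle\in\mathcal{S}\}$. A deterministic mixed policy (DMP) $\pi_{\mathcal{S}}$ compatible with $\mathcal{S}$ assigns to each $\langle X,\mathbf{C}_X\rangle\in\mathcal{S}$ a function $\pi_{X|\mathbf{C}_X}:\mathcal{R}_{\mathbf{C}_X}\to\mathcal{R}_X$ (a constant value in $\mathcal{R}_X$ when $\mathbf{C}_X=\emptyset$); $\Pi_{\mathcal{S}}$ is the set of such DMPs. Applying $\pi_{\mathcal{S}}$ to an SCM replaces each $f_X$ by $\pi_{X|\mathbf{C}_X}$ (so $X=\pi_{X|\mathbf{C}_X}(\mathbf{C}_X)$), yielding the interventional distribution $p_{\pi_{\mathcal{S}}}(\mathbf{V})$; the target effect is $\mu^Y_{\pi_{\mathcal{S}}}=\mathbb{E}_{p_{\pi_{\mathcal{S}}}}[Y]$. *)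

theory Defs
  imports "HOL-Probability.Probability"
begin

text \<open>Causal graph over the finite variable set V = UNIV :: 'v set.
  D: directed edges (a,b) meaning a \<rightarrow> b; B: bidirected edges (symmetric, irreflexive).\<close>

definition causal_graph :: "('v \<times> 'v) set \<Rightarrow> ('v \<times> 'v) set \<Rightarrow> bool" where
  "causal_graph D B \<longleftrightarrow> acyclic D \<and> sym B \<and> irrefl B"

definition pa_G :: "('v \<times> 'v) set \<Rightarrow> 'v \<Rightarrow> 'v set" where
  "pa_G D v = {w. (w, v) \<in> D}"

definition an_G :: "('v \<times> 'v) set \<Rightarrow> 'v \<Rightarrow> 'v set" where
  "an_G D v = {w. (w, v) \<in> D\<^sup>+}"

definition sp_G :: "('v \<times> 'v) set \<Rightarrow> 'v \<Rightarrow> 'v set" where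
  "sp_G B v = {w. (w, v) \<in> B}"

text \<open>A structural causal model with real-valued endogenous variables, finite ranges,
  finitely many mutually independent exogenous variables indexed by Ex (a finite set of
  naturals), each with a discrete distribution PU e.\<close>

record 'v scm =
  Rng :: "'v \<Rightarrow> real set"
  Ex  :: "nat set"
  PU  :: "nat \<Rightarrow> real pmf"
  Pa  :: "'v \<Rightarrow> 'v set"
  UV  :: "'v \<Rightarrow> nat set"
  Fn  :: "'v \<Rightarrow> ('v \<Rightarrow> real) \<Rightarrow> (nat \<Rightarrow> real) \<Rightarrow> real"

definition scm_graph :: "'v scm \<Rightarrow> ('v \<times> 'v) set" where
  "scm_graph M = {(w, v). w \<in> Pa M v}"

definition wf_scm :: "'v scm \<Rightarrow> bool" where
  "wf_scm M \<longleftrightarrow>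
     finite (Ex M) \<and>
     (\<forall>v. finite (Rng M v) \<and> Rng M v \<noteq> {}) \<and>
     (\<forall>v. UV M v \<subseteq> Ex M) \<and>
     acyclic (scm_graph M) \<and>
     (\<forall>v x x' u u'. (\<forall>w\<in>Pa M v. x w = x' w) \<longrightarrow> (\<forall>e\<in>UV M v. u e = u' e)
         \<longrightarrow> Fn M v x u = Fn M v x' u') \<and>
     (\<forall>v x u. Fn M v x u \<in> Rng M v)"

definition compatible :: "('v \<times> 'v) set \<Rightarrow> ('v \<times> 'v) set \<Rightarrow> 'v scm \<Rightarrow> bool" where
  "compatible D B M \<longleftrightarrow>
     scm_graph M \<subseteq> D \<and>
     (\<forall>v w. v \<noteq> w \<longrightarrow> UV M v \<inter> UV M w \<noteq> {} \<longrightarrow> (v, w) \<in> B)"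

definition mps_graph :: "('v \<times> 'v) set \<Rightarrow> ('v \<rightharpoonup> 'v set) \<Rightarrow> ('v \<times> 'v) set" where
  "mps_graph D S = {(a, b). (a, b) \<in> D \<and> b \<notin> dom S} \<union> {(c, x). \<exists>C. S x = Some C \<and> c \<in> C}"

definition is_mps :: "('v \<times> 'v) set \<Rightarrow> 'v set \<Rightarrow> 'v \<Rightarrow> ('v \<rightharpoonup> 'v set) \<Rightarrow> bool" where
  "is_mps D I Y S \<longleftrightarrow>
     dom S \<subseteq> I \<and>
     (\<forall>X C. S X = Some C \<longrightarrow> C \<subseteq> UNIV - {X, Y}) \<and>
     acyclic (mps_graph D S)"

definition is_hard :: "('v \<rightharpoonup> 'v set) \<Rightarrow> bool" where
  "is_hard S \<longleftrightarrow> (\<forall>X C. S X = Some C \<longrightarrow> C = {})"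

definition is_dmp :: "'v scm \<Rightarrow> ('v \<rightharpoonup> 'v set) \<Rightarrow> ('v \<Rightarrow> ('v \<Rightarrow> real) \<Rightarrow> real) \<Rightarrow> bool" where
  "is_dmp M S \<pi> \<longleftrightarrow>
     (\<forall>X C. S X = Some C \<longrightarrow>
        (\<forall>x x'. (\<forall>c\<in>C. x c = x' c) \<longrightarrow> \<pi> X x = \<pi> X x') \<and>
        (\<forall>x. \<pi> X x \<in> Rng M X))"

definition mech :: "'v scm \<Rightarrow> ('v \<rightharpoonup> 'v set) \<Rightarrow> ('v \<Rightarrow> ('v \<Rightarrow> real) \<Rightarrow> real)
     \<Rightarrow> 'v \<Rightarrow> ('v \<Rightarrow> real) \<Rightarrow> (nat \<Rightarrow> real) \<Rightarrow> real" where
  "mech M S \<pi> v x u = (case S v of None \<Rightarrow> Fn M v x u | Some _ \<Rightarrow> \<pi> v x)"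

text \<open>The (unique, by acyclicity) solution of the intervened structural equations.\<close>
definition solve :: "'v scm \<Rightarrow> ('v \<rightharpoonup> 'v set) \<Rightarrow> ('v \<Rightarrow> ('v \<Rightarrow> real) \<Rightarrow> real)
     \<Rightarrow> (nat \<Rightarrow> real) \<Rightarrow> ('v \<Rightarrow> real)" where
  "solve M S \<pi> u = (THE x. \<forall>v. x v = mech M S \<pi> v x u)"

definition interv_dist :: "'v scm \<Rightarrow> ('v \<rightharpoonup> 'v set) \<Rightarrow> ('v \<Rightarrow> ('v \<Rightarrow> real) \<Rightarrow> real)
     \<Rightarrow> ('v \<Rightarrow> real) pmf" where
  "interv_dist M S \<pi> = map_pmf (solve M S \<pi>) (Pi_pmf (Ex M) 0 (PU M))"

definition mu :: "'v scm \<Rightarrow> ('v \<rightharpoonup> 'v set) \<Rightarrow> ('v \<Rightarrow> ('v \<Rightarrow> real) \<Rightarrow> real) \<Rightarrow> 'v \<Rightarrow> real" where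
  "mu M S \<pi> Y = measure_pmf.expectation (interv_dist M S \<pi>) (\<lambda>x. x Y)"

end

theory Submission imports Defs begin

lemma mech_dep:
  assumes "wf_scm M" "compatible D B M" "is_mps D I Y S" "is_dmp M S \<pi>"
    and "\<forall>w. (w, v) \<in> mps_graph D S \<longrightarrow> x w = x' w"
  shows "mech M S \<pi> v x u = mech M S \<pi> v x' u"
proof (cases "S v")
  case None
  have "\<forall>w\<in>Pa M v. x w = x' w"
  proof
    fix w assume "w \<in> Pa M v"
    then have "(w, v) \<in> D" using assms(2) unfolding compatible_def scm_graph_def by auto
    then have "(w, v) \<in> mps_graph D S" using None unfolding mps_graph_def by auto
    then show "x w = x' w" using assms(5) by auto
  qed
  moreover have "\<forall>v x x' u u'. (\<forall>w\<in>Pa M v. x w = x' w) \<longrightarrow> (\<forall>e\<in>UV M v. u e = u' e)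
         \<longrightarrow> Fn M v x u = Fn M v x' u'" using assms(1) unfolding wf_scm_def by (elim conjE)
  ultimately have "Fn M v x u = Fn M v x' u" by blast
  then show ?thesis using None unfolding mech_def by simp
next
  case (Some C)
  have "\<forall>c\<in>C. x c = x' c" using assms(5) Some unfolding mps_graph_def by auto
  moreover have "\<forall>x x'. (\<forall>c\<in>C. x c = x' c) \<longrightarrow> \<pi> v x = \<pi> v x'"
    using Some assms(4) unfolding is_dmp_def by blast
  ultimately have "\<pi> v x = \<pi> v x'" by blast
  then show ?thesis using Some unfolding mech_def by simp
qed

lemma solve_eq:
  fixes D B :: "('v::finite \<times> 'v) set"
  assumes "wf_scm M" "compatible D B M" "is_mps D I Y S" "is_dmp M S \<pi>"
  shows "solve M S \<pi> u v = mech M S \<pi> v (solve M S \<pi> u) u"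
proof -
  let ?R = "mps_graph D S"
  have acR: "acyclic ?R" using assms(3) unfolding is_mps_def by (elim conjE)
  have finR: "finite ?R" by simp
  have wfR: "wf ?R" using finR acR by (rule finite_acyclic_wf)
  define sol where "sol = wfrec ?R (\<lambda>f v. mech M S \<pi> v f u)"
  have ex: "\<forall>v. sol v = mech M S \<pi> v sol u"
  proof
    fix v
    have "sol v = mech M S \<pi> v (cut sol ?R v) u"
      unfolding sol_def by (rule wfrec[OF wfR])
    also have "\<dots> = mech M S \<pi> v sol u"
    proof (rule mech_dep[OF assms])
      show "\<forall>w. (w, v) \<in> ?R \<longrightarrow> cut sol ?R v w = sol w"
        by (simp add: cut_apply)
    qed
    finally show "sol v = mech M S \<pi> v sol u" .
  qed
  have uniq: "x = sol" if hx: "\<forall>v. x v = mech M S \<pi> v x u" for x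
  proof
    fix v show "x v = sol v"
    proof (induction v rule: wf_induct[OF wfR])
      case (1 v)
      have "x v = mech M S \<pi> v x u" using hx by (rule spec)
      also have "\<dots> = mech M S \<pi> v sol u"
      proof (rule mech_dep[OF assms])
        show "\<forall>w. (w, v) \<in> ?R \<longrightarrow> x w = sol w" using 1 by blast
      qed
      also have "\<dots> = sol v" using ex[rule_format, of v] by (rule sym)
      finally show ?case .
    qed
  qed
  have "solve M S \<pi> u = sol"
    unfolding solve_def by (rule the_equality[where P="\<lambda>x. \<forall>v. x v = mech M S \<pi> v x u", OF ex uniq])
  then show ?thesis using ex by simp
qed

definition nz :: "real \<Rightarrow> real" where "nz r = (if r = 0 then 0 else 1)"

lemma mu_calc:
  assumes "\<forall>u. solve M S \<pi> u Y = g (u 0)" "Ex M = {0}"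
    "PU M 0 = map_pmf (\<lambda>b. if b then 1 else 0) (bernoulli_pmf (1/2))"
  shows "mu M S \<pi> Y = g 1 / 2 + g 0 / 2"
proof -
  have comp: "map_pmf (\<lambda>u. u 0) (Pi_pmf {0::nat} 0 (PU M)) = PU M 0"
    by (subst Pi_pmf_component) auto
  have "mu M S \<pi> Y = measure_pmf.expectation (Pi_pmf {0} 0 (PU M)) (\<lambda>u. g (u 0))"
    unfolding mu_def interv_dist_def using assms(1,2) by simp
  also have "\<dots> = measure_pmf.expectation (map_pmf (\<lambda>u. u 0) (Pi_pmf {0::nat} 0 (PU M))) g"
    by simp
  also have "\<dots> = measure_pmf.expectation (PU M 0) g"
    by (simp only: comp)
  also have "\<dots> = g 1 * (1/2) + g 0 * (1 - 1/2)"
    using assms(3) by simp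
  also have "\<dots> = g 1 / 2 + g 0 / 2" by simp
  finally show ?thesis .
qed

lemma nz01: "nz r \<in> {0,1}" by (simp add: nz_def)

theorem proposition1:
  fixes D B :: "('v::finite \<times> 'v) set" and I :: "'v set" and Y C X :: 'v
  assumes "causal_graph D B"
    and "I \<subseteq> UNIV - {Y}"
    and "(C \<in> pa_G D Y \<and> C \<notin> I) \<or> C \<in> sp_G B Y"
    and "X \<in> an_G D Y \<inter> I"
    and "is_mps D I Y [X \<mapsto> {C}]"
  shows "\<exists>M :: 'v scm. wf_scm M \<and> compatible D B M \<and>
    Inf {mu M S \<pi> Y | S \<pi>. is_mps D I Y S \<and> is_hard S \<and> is_dmp M S \<pi>}
    > Inf {mu M S \<pi> Y | S \<pi>. is_mps D I Y S \<and> is_dmp M S \<pi>}"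
proof -
  have acD: "acyclic D" and symB: "sym B" using assms(1) by (auto simp: causal_graph_def)
  have wfD: "wf D" by (rule finite_acyclic_wf) (simp_all add: acD)
  have XY: "(X, Y) \<in> D\<^sup>+" and XI: "X \<in> I" using assms(4) by (auto simp: an_G_def)
  have YI: "Y \<notin> I" using assms(2) by auto
  have h5: "\<forall>X' C'. [X \<mapsto> {C}] X' = Some C' \<longrightarrow> C' \<subseteq> UNIV - {X', Y}"
    using assms(5) unfolding is_mps_def by (elim conjE)
  have "{C} \<subseteq> UNIV - {X, Y}" using h5[rule_format, of X "{C}"] by simp
  then have CX: "C \<noteq> X" and CY: "C \<noteq> Y" by auto
  let ?G = "mps_graph D [X \<mapsto> {C}]"
  have acG: "acyclic ?G" using assms(5) by (auto simp: is_mps_def)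
  have XCG: "(X, b) \<in> ?G\<^sup>+" if "(X, b) \<in> D\<^sup>+" for b
    using that
  proof (induction rule: trancl_induct)
    case (base y)
    then have "y \<noteq> X" using acD by (auto simp: acyclic_def)
    then show ?case using base by (auto simp: mps_graph_def)
  next
    case (step y z)
    have "z \<noteq> X"
    proof
      assume "z = X"
      then have "(X, X) \<in> D\<^sup>+" using step(1,2) by (simp add: trancl_into_trancl)
      then show False using acD by (simp add: acyclic_def)
    qed
    then have "(y, z) \<in> ?G" using step by (auto simp: mps_graph_def)
    then show ?case using step by (meson trancl.trancl_into_trancl)
  qed
  have notXC: "(X, C) \<notin> D\<^sup>+"
  proof
    assume "(X, C) \<in> D\<^sup>+"
    then have "(X, C) \<in> ?G\<^sup>+" by (rule XCG)
    moreover have "(C, X) \<in> ?G" by (auto simp: mps_graph_def)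
    ultimately have "(X, X) \<in> ?G\<^sup>+" by (meson trancl.trancl_into_trancl)
    then show False using acG by (auto simp: acyclic_def)
  qed
  define A where "A = {v. (X, v) \<in> D\<^sup>* \<and> (v, Y) \<in> D\<^sup>+}"
  have XA: "X \<in> A" using XY by (auto simp: A_def)
  have YA: "Y \<notin> A" using acD by (auto simp: A_def acyclic_def)
  have CA: "C \<notin> A" using notXC CX by (auto simp: A_def rtrancl_eq_or_trancl)
  have exp: "\<exists>w. w \<in> A \<and> (w, v) \<in> D" if "v \<in> A - {X} \<or> v = Y" for v
    using that
  proof
    assume v: "v \<in> A - {X}"
    then have "(X, v) \<in> D\<^sup>*" "v \<noteq> X" "(v, Y) \<in> D\<^sup>+" by (auto simp: A_def)
    then have "(X, v) \<in> D\<^sup>+" by (simp add: rtrancl_eq_or_trancl)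
    then obtain w where w1: "(X, w) \<in> D\<^sup>*" and w2: "(w, v) \<in> D" by (blast dest: tranclD2)
    have "(w, Y) \<in> D\<^sup>+" using w2 \<open>(v, Y) \<in> D\<^sup>+\<close> by (rule trancl_into_trancl2)
    with w1 w2 show ?thesis by (auto simp: A_def)
  next
    assume "v = Y"
    then obtain w where w1: "(X, w) \<in> D\<^sup>*" and w2: "(w, v) \<in> D" using XY by (blast dest: tranclD2)
    have "(w, Y) \<in> D\<^sup>+" using w2 \<open>v = Y\<close> by (simp add: r_into_trancl)
    with w1 w2 show ?thesis by (auto simp: A_def)
  qed
  have "\<forall>v. \<exists>w. (v \<in> A - {X} \<or> v = Y) \<longrightarrow> w \<in> A \<and> (w, v) \<in> D"
    using exp by blast
  then have "\<exists>p. \<forall>v. (v \<in> A - {X} \<or> v = Y) \<longrightarrow> p v \<in> A \<and> (p v, v) \<in> D"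
    by (rule choice)
  then obtain p where p: "\<And>v. v \<in> A - {X} \<or> v = Y \<Longrightarrow> p v \<in> A \<and> (p v, v) \<in> D"
    by blast
  define c1 where "c1 = (C \<in> pa_G D Y \<and> C \<notin> I)"
  define M :: "'v scm" where "M = \<lparr>Rng = \<lambda>v. if v \<in> A \<or> v = C \<or> v = Y then {0,1} else {0},
     Ex = {0}, PU = \<lambda>_. map_pmf (\<lambda>b. if b then 1 else 0) (bernoulli_pmf (1/2)),
     Pa = \<lambda>v. if v = Y then (if c1 then {p Y, C} else {p Y}) else if v \<in> A \<and> v \<noteq> X then {p v} else {},
     UV = \<lambda>v. if v = C \<or> (v = Y \<and> \<not> c1) then {0} else {},
     Fn = \<lambda>v x u. if v = Y then (if x (p Y) = (if c1 then x C else nz (u 0)) then 1 else 0)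
        else if v = C then nz (u 0) else if v \<in> A \<and> v \<noteq> X then nz (x (p v)) else 0\<rparr>"
  have Rng_M: "Rng M v = (if v \<in> A \<or> v = C \<or> v = Y then {0,1} else {0})" for v
    by (simp add: M_def)
  have Ex_M: "Ex M = {0}" by (simp add: M_def)
  have PU_M: "PU M e = map_pmf (\<lambda>b. if b then 1 else 0) (bernoulli_pmf (1/2))" for e
    by (simp add: M_def)
  have Pa_M: "Pa M v = (if v = Y then (if c1 then {p Y, C} else {p Y}) else if v \<in> A \<and> v \<noteq> X then {p v} else {})" for v
    by (simp add: M_def)
  have UV_M: "UV M v = (if v = C \<or> (v = Y \<and> \<not> c1) then {0} else {})" for v
    by (simp add: M_def)
  have Fn_M: "Fn M v x u = (if v = Y then (if x (p Y) = (if c1 then x C else nz (u 0)) then 1 else 0)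
        else if v = C then nz (u 0) else if v \<in> A \<and> v \<noteq> X then nz (x (p v)) else 0)" for v x u
    by (simp add: M_def)
  have graphD: "scm_graph M \<subseteq> D"
  proof
    fix e assume "e \<in> scm_graph M"
    then obtain w v where e: "e = (w, v)" "w \<in> Pa M v" by (auto simp: scm_graph_def)
    show "e \<in> D"
    proof (cases "v = Y")
      case True
      then show ?thesis using e p[of Y] by (auto simp: Pa_M c1_def pa_G_def split: if_splits)
    next
      case False
      then show ?thesis using e p[of v] by (auto simp: Pa_M split: if_splits)
    qed
  qed
  have compat: "compatible D B M"
    unfolding compatible_def
  proof (intro conjI allI impI graphD)
    fix v w assume "v \<noteq> w" "UV M v \<inter> UV M w \<noteq> {}"
    then have "\<not> c1" "(v = C \<and> w = Y) \<or> (v = Y \<and> w = C)"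
      by (auto simp: UV_M split: if_splits)
    then have "(C, Y) \<in> B" using assms(3) by (auto simp: c1_def sp_G_def)
    then show "(v, w) \<in> B" using \<open>(v = C \<and> w = Y) \<or> (v = Y \<and> w = C)\<close> symB
      by (auto simp: sym_def)
  qed
  have wfM: "wf_scm M"
    unfolding wf_scm_def
  proof (intro conjI allI impI)
    show "acyclic (scm_graph M)" using acyclic_subset[OF acD graphD] .
    fix v :: 'v and x x' :: "'v \<Rightarrow> real" and u u' :: "nat \<Rightarrow> real"
    assume h1: "\<forall>w\<in>Pa M v. x w = x' w" and h2: "\<forall>e\<in>UV M v. u e = u' e"
    show "Fn M v x u = Fn M v x' u'"
      using h1 h2 CY by (auto simp: Fn_M Pa_M UV_M)
  next
    fix v :: 'v and x :: "'v \<Rightarrow> real" and u :: "nat \<Rightarrow> real"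
    show "Fn M v x u \<in> Rng M v"
      using nz01 by (auto simp: Fn_M Rng_M)
  qed (auto simp: M_def)
  have solC: "solve M S \<pi> u C = nz (u 0)"
    if hs: "is_mps D I Y S" "is_dmp M S \<pi>" "S C = None" for S \<pi> u
  proof -
    have "solve M S \<pi> u C = mech M S \<pi> C (solve M S \<pi> u) u" by (rule solve_eq[OF wfM compat hs(1,2)])
    also have "\<dots> = Fn M C (solve M S \<pi> u) u" using hs(3) by (simp add: mech_def)
    also have "\<dots> = nz (u 0)" using CY by (simp add: Fn_M)
    finally show ?thesis .
  qed
  have solY: "solve M S \<pi> u Y = (if solve M S \<pi> u (p Y) = nz (u 0) then 1 else 0)"
    if hs: "is_mps D I Y S" "is_dmp M S \<pi>" for S \<pi> u
  proof -
    have "dom S \<subseteq> I" using hs(1) unfolding is_mps_def by (elim conjE)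
    then have SY: "S Y = None" using YI by (metis domIff subsetD)
    have "solve M S \<pi> u Y = mech M S \<pi> Y (solve M S \<pi> u) u" by (rule solve_eq[OF wfM compat hs])
    also have "\<dots> = Fn M Y (solve M S \<pi> u) u" using SY by (simp add: mech_def)
    also have "\<dots> = (if solve M S \<pi> u (p Y) = (if c1 then solve M S \<pi> u C else nz (u 0)) then 1 else 0)"
      by (simp add: Fn_M)
    also have "\<dots> = (if solve M S \<pi> u (p Y) = nz (u 0) then 1 else 0)"
    proof (cases c1)
      case True
      have "dom S \<subseteq> I" using hs(1) unfolding is_mps_def by (elim conjE)
      then have "S C = None" using True unfolding c1_def by (metis domIff subsetD)
      then show ?thesis using solC[OF hs] True by simp
    qed simp
    finally show ?thesis .
  qed
  have hard_val: "\<forall>v\<in>A. \<exists>c\<in>{0,1}. \<forall>u. solve M S \<pi> u v = c"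
    if hs: "is_mps D I Y S" "is_hard S" "is_dmp M S \<pi>" for S \<pi>
  proof
    fix v show "v \<in> A \<Longrightarrow> \<exists>c\<in>{0,1}. \<forall>u. solve M S \<pi> u v = c"
    proof (induction v rule: wf_induct[OF wfD])
      case (1 v)
      show ?case
      proof (cases "S v")
        case (Some C')
        then have "C' = {}" using hs(2) unfolding is_hard_def by blast
        have dmp: "(\<forall>x x'. (\<forall>c\<in>C'. x c = x' c) \<longrightarrow> \<pi> v x = \<pi> v x') \<and> (\<forall>x. \<pi> v x \<in> Rng M v)"
          using hs(3) Some unfolding is_dmp_def by blast
        have const: "\<pi> v x = \<pi> v (\<lambda>_. 0)" for x
          using dmp \<open>C' = {}\<close> by (metis empty_iff)
        have rng: "\<pi> v (\<lambda>_. 0) \<in> Rng M v" using dmp by blast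
        have "solve M S \<pi> u v = \<pi> v (solve M S \<pi> u)" for u
          using solve_eq[OF wfM compat hs(1,3), of u v] Some by (simp add: mech_def)
        then have "\<forall>u. solve M S \<pi> u v = \<pi> v (\<lambda>_. 0)"
          using const by metis
        then show ?thesis using rng 1 by (auto simp: Rng_M)
      next
        case None
        show ?thesis
        proof (cases "v = X")
          case True
          then have "\<forall>u. solve M S \<pi> u v = 0"
            using solve_eq[OF wfM compat hs(1,3), of _ v] None CX YA XA by (auto simp: mech_def Fn_M)
          then show ?thesis by auto
        next
          case False
          then have pv: "p v \<in> A" "(p v, v) \<in> D" using p[of v] 1 by auto
          then obtain c where c: "\<forall>u. solve M S \<pi> u (p v) = c" using 1 by blast
          have "v \<noteq> Y" "v \<noteq> C" using 1 YA CA by auto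
          then have "\<forall>u. solve M S \<pi> u v = nz c"
            using solve_eq[OF wfM compat hs(1,3), of _ v] None False 1 c by (auto simp: mech_def Fn_M)
          then show ?thesis using nz01 by blast
        qed
      qed
    qed
  qed
  have hard_mu: "mu M S \<pi> Y = 1/2" if hs: "is_mps D I Y S" "is_hard S" "is_dmp M S \<pi>" for S \<pi>
  proof -
    obtain c where c: "c \<in> {0,1}" "\<forall>u. solve M S \<pi> u (p Y) = c"
      using hard_val[OF hs] p[of Y] by blast
    have "\<forall>u. solve M S \<pi> u Y = (\<lambda>r. if c = nz r then 1 else 0) (u 0)"
      using solY[OF hs(1,3)] c by auto
    from mu_calc[OF this Ex_M PU_M] show ?thesis using c by (auto simp: nz_def)
  qed
  define S0 :: "'v \<rightharpoonup> 'v set" where "S0 = [X \<mapsto> {C}]"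
  define \<pi>0 :: "'v \<Rightarrow> ('v \<Rightarrow> real) \<Rightarrow> real" where "\<pi>0 = (\<lambda>v x. 1 - nz (x C))"
  have S0mps: "is_mps D I Y S0" using assms(5) by (simp add: S0_def)
  have S0dmp: "is_dmp M S0 \<pi>0"
    using XA nz01 by (auto simp: is_dmp_def S0_def \<pi>0_def Rng_M nz_def)
  have mixed_val: "\<forall>u. solve M S0 \<pi>0 u v = 1 - nz (u 0)" if "v \<in> A" for v
    using that
  proof (induction v rule: wf_induct[OF wfD])
    case (1 v)
    show ?case
    proof (cases "v = X")
      case True
      have S0C: "S0 C = None" using CX by (simp add: S0_def)
      have eX: "solve M S0 \<pi>0 u X = 1 - nz (solve M S0 \<pi>0 u C)" for u
        using solve_eq[OF wfM compat S0mps S0dmp, of u X] by (simp add: mech_def S0_def \<pi>0_def)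
      show ?thesis
        using True eX solC[OF S0mps S0dmp S0C] by (simp add: nz_def)
    next
      case False
      then have pv: "p v \<in> A" "(p v, v) \<in> D" using p[of v] 1 by auto
      have vYC: "v \<noteq> Y" "v \<noteq> C" using 1 YA CA by auto
      have S0v: "S0 v = None" using False by (simp add: S0_def)
      have IH: "\<forall>u. solve M S0 \<pi>0 u (p v) = 1 - nz (u 0)" using 1 pv by blast
      have ev: "solve M S0 \<pi>0 u v = nz (solve M S0 \<pi>0 u (p v))" for u
        using solve_eq[OF wfM compat S0mps S0dmp, of u v] S0v vYC False 1(2)
        by (simp add: mech_def Fn_M)
      show ?thesis using ev IH by (simp add: nz_def)
    qed
  qed
  have mixed_mu: "mu M S0 \<pi>0 Y = 0"
  proof -
    have "\<forall>u. solve M S0 \<pi>0 u Y = (\<lambda>r. 0) (u 0)"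
      using solY[OF S0mps S0dmp] mixed_val[of "p Y"] p[of Y] by (auto simp: nz_def)
    from mu_calc[OF this Ex_M PU_M] show ?thesis by simp
  qed
  let ?H = "{mu M S \<pi> Y | S \<pi>. is_mps D I Y S \<and> is_hard S \<and> is_dmp M S \<pi>}"
  let ?A = "{mu M S \<pi> Y | S \<pi>. is_mps D I Y S \<and> is_dmp M S \<pi>}"
  have emp_mps: "is_mps D I Y Map.empty" using acD by (simp add: is_mps_def mps_graph_def)
  have "?H = {1/2}"
  proof
    show "?H \<subseteq> {1/2}" using hard_mu by auto
    have "mu M Map.empty (\<lambda>_ _. 0) Y \<in> ?H" using emp_mps
      by (auto simp: is_hard_def is_dmp_def)
    then show "{1/2} \<subseteq> ?H" using hard_mu emp_mps by (auto simp: is_hard_def is_dmp_def)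
  qed
  then have H: "Inf ?H = 1/2" by simp
  have nonneg: "0 \<le> mu M S \<pi> Y" if hs: "is_mps D I Y S" "is_dmp M S \<pi>" for S \<pi>
    unfolding mu_def interv_dist_def
  proof (rule integral_nonneg_AE, rule AE_pmfI)
    fix x assume "x \<in> set_pmf (map_pmf (solve M S \<pi>) (Pi_pmf (Ex M) 0 (PU M)))"
    then obtain u where "x = solve M S \<pi> u" by auto
    then show "0 \<le> x Y" by (simp add: solY[OF hs])
  qed
  have "Inf ?A \<le> 0"
  proof -
    have "0 \<in> ?A" using mixed_mu S0mps S0dmp by force
    moreover have "bdd_below ?A" using nonneg by (auto intro!: bdd_belowI[of _ 0])
    ultimately show ?thesis by (rule cInf_lower)
  qed
  then show ?thesis using wfM compat H by (intro exI[of _ M]) auto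
qed

end
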